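(* Let $N\ge3$, $G\in\mathcal G_2(N)$, $\varepsilon=0$ and $s_0\in S_{nc}$. Then for every $\gamma\in(0,1)$, $\Gamma_N(G|s_0,\gamma,0)$ has a positional trigger strategies profile $\bar\sigma$.
   Context: Setting. $G=(V,E)$ is a finite, simple, connected, undirected graph; $N\ge 3$ is an integer; $\gamma\in(0,1)$ and $\varepsilon\in[0,\frac1{N-1}]$ are parameters. There are $N$ tokens: cops $C_1,\dots,C_{N-1}$ (tokens $1,\dots,N-1$) and the robber $R$ (token $N$). A state is $s=(x^1,\dots,x^N,n)$ where $x^i\in V$ is the position of token $i$ and $n\in\{1,\dots,N\}$ is the token that moves next; $S^n$ denotes the set of states with token $n$ to move. A state is a capture state if $x^i=x^N$ for some $i\le N-1$; $S_{nc}$ is the set of noncapture states. In each turn exactly one token, the one to move, moves to a vertex of its closed neighbourhood (it may stay put); the order of moves is $C_1,C_2,\dots,C_{N-1},R,C_1,\dots$. Starting from an initial state $s_0\in S_{nc}$ at time $0$, the capture time is the first time $t$ at which a capture state occurs (infinite if never); after capture the game is over. Auxiliary games. For $m\in\{1,\dots,N\}$, $\Gamma_N^m(G|s_0,\gamma,\varepsilon)$ is the two-player zero-sum game in which player $P_m$ controls token $m$ and player $P_{-m}$ controls all other tokens, with the following payoff to $P_m$ ($P_{-m}$ receives its negative): $0$ if no capture ever occurs; if capture occurs at time $t$: for $m=N$, $-\gamma^t$; for $m\le N-1$, $\frac{1-\varepsilon}{K}\gamma^t$ if exactly $K\in\{1,\dots,N-2\}$ cops, including $C_m$, are on the robber's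 vertex, $\frac{\varepsilon}{N-K-1}\gamma^t$ if exactly $K\in\{1,\dots,N-2\}$ cops, not including $C_m$, are on the robber's vertex, and $\frac{\gamma^t}{N-1}$ if all $N-1$ cops are on the robber's vertex. $\Gamma^N_N$ is the modified cops-and-robber (CR) game. A pure positional strategy for token $n$ maps each state in $S^n\cap S_{nc}$ to an allowed next vertex. Each $\Gamma^m_N$ has optimal pure positional strategies (optimal from every initial state). For $m,n\in\{1,\dots,N\}$, $\phi^n_m$ denotes the strategy of token $n$ in a chosen pair of optimal pure positional strategies of $\Gamma^m_N$ (so $\phi^m_m$ is $P_m$'s optimal strategy and $(\phi^n_m)_{n\ne m}$ is $P_{-m}$'s). $\widehat\Sigma^n$ is the set of pure positional strategies of token $n$ that are components of optimal strategy pairs of $\Gamma^N_N$ (CR-optimal strategies). Trigger strategies. Given a choice of $(\phi^n_m)_{n,m}$, the trigger strategies profile $\bar\sigma=(\bar\sigma^1,\dots,\bar\sigma^N)$ of the $N$-player SCAR game $\Gamma_N(G|s_0,\gamma,\varepsilon)$ (same board and moves; player $n$ controls token $n$) is: token $n$, at current state $s$, plays $\phi^n_n(s)$ as long as every other player $m$ has followed $\phi^m_m$, and plays $\phi^n_m(s)$ from the moment a player $m\neq n$ deviates from $\phi^m_m$. Different choices of the optimal strategies give different trigger strategies profiles. $\bar\sigma$ is called positional if for all $n,m\in\{1,\dots,N\}$ there is $\widehat\sigma^n\in\widehat\Sigma^n$ with $\phi^n_m(s)=\widehat\sigma^n(s)$ for every state $s\in S^n\cap S_{nc}$ reachable from $s_0$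 by a finite sequence of legal moves passing only through noncapture states; otherwise $\bar\sigma$ is nonpositional. State cop number. For $s\in S_{nc}$, $c(G|s)=c_N(G|s)$ is the minimum $k\in\{1,\dots,N-1\}$ for which there exist $k$ cops and strategies for them such that, starting from $s$, a capture (by any cop) occurs whatever the other $N-k$ tokens (including $R$) do; $c(G|s)=\infty$ if no such $k$ exists. $c(G)$ is the classical cop number of $G$. Graph classes. $\mathcal G(N)=\{G: c(G)>N-1\}$; $\mathcal G_2(N)=\{G\in\mathcal G(N): c(G|s)=\infty\text{ for all } s\in S^N\cap S_{nc}\}$. *)

theory Defs
  imports Main "HOL.Real"
begin

definition fsc_graph :: "'v set \<Rightarrow> ('v \<Rightarrow> 'v \<Rightarrow> bool) \<Rightarrow> bool" where
  "fsc_graph V E \<longleftrightarrow> finite V \<and> V \<noteq> {}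
     \<and> (\<forall>x y. E x y \<longrightarrow> x \<in> V \<and> y \<in> V)
     \<and> (\<forall>x y. E x y \<longrightarrow> E y x)
     \<and> (\<forall>x. \<not> E x x)
     \<and> (\<forall>x\<in>V. \<forall>y\<in>V. (x, y) \<in> {(a, b). E a b}\<^sup>*)"

definition cnbhd :: "('v \<Rightarrow> 'v \<Rightarrow> bool) \<Rightarrow> 'v \<Rightarrow> 'v set" where
  "cnbhd E x = insert x {y. E x y}"

text \<open>A state is (xs, n): xs is the list of positions, token i (1 \<le> i \<le> N)
being at xs ! (i - 1); n \<in> {1..N} is the token to move.  Tokens 1..N-1 are the
cops, token N is the robber.\<close>
type_synonym 'v state = "'v list \<times> nat"
type_synonym 'v hist = "'v state list"

definition tpos :: "'v list \<Rightarrow> nat \<Rightarrow> 'v" where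
  "tpos xs i = xs ! (i - 1)"

definition valid_state :: "nat \<Rightarrow> 'v set \<Rightarrow> 'v state \<Rightarrow> bool" where
  "valid_state N V s \<longleftrightarrow> length (fst s) = N \<and> set (fst s) \<subseteq> V \<and> snd s \<in> {1..N}"

definition is_capture :: "nat \<Rightarrow> 'v state \<Rightarrow> bool" where
  "is_capture N s \<longleftrightarrow> (\<exists>i\<in>{1..N-1}. tpos (fst s) i = tpos (fst s) N)"

definition next_tok :: "nat \<Rightarrow> nat \<Rightarrow> nat" where
  "next_tok N n = (if N \<le> n then 1 else Suc n)"

definition move :: "nat \<Rightarrow> 'v state \<Rightarrow> 'v \<Rightarrow> 'v state" where
  "move N s v = ((fst s)[snd s - 1 := v], next_tok N (snd s))"

text \<open>A (pure, history dependent) strategy profile assigns to each token n a map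
from finite histories (nonempty lists of states, last = current state) to vertices.\<close>
type_synonym 'v profile = "nat \<Rightarrow> 'v hist \<Rightarrow> 'v"

fun play :: "nat \<Rightarrow> 'v profile \<Rightarrow> 'v state \<Rightarrow> nat \<Rightarrow> 'v hist" where
  "play N prof s0 0 = [s0]"
| "play N prof s0 (Suc t) =
     (let h = play N prof s0 t; s = last h in h @ [move N s (prof (snd s) h)])"

definition state_at :: "nat \<Rightarrow> 'v profile \<Rightarrow> 'v state \<Rightarrow> nat \<Rightarrow> 'v state" where
  "state_at N prof s0 t = last (play N prof s0 t)"

definition legal_strat :: "nat \<Rightarrow> ('v \<Rightarrow> 'v \<Rightarrow> bool) \<Rightarrow> nat \<Rightarrow> ('v hist \<Rightarrow> 'v) \<Rightarrow> bool" where
  "legal_strat N E n g \<longleftrightarrow>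
     (\<forall>h. h \<noteq> [] \<and> snd (last h) = n \<and> \<not> is_capture N (last h)
          \<longrightarrow> g h \<in> cnbhd E (tpos (fst (last h)) n))"

definition legal_profile :: "nat \<Rightarrow> ('v \<Rightarrow> 'v \<Rightarrow> bool) \<Rightarrow> 'v profile \<Rightarrow> bool" where
  "legal_profile N E prof \<longleftrightarrow> (\<forall>n\<in>{1..N}. legal_strat N E n (prof n))"

definition reward :: "nat \<Rightarrow> real \<Rightarrow> nat \<Rightarrow> 'v list \<Rightarrow> real" where
  "reward N eps m xs =
    (let K = card {i\<in>{1..N-1}. tpos xs i = tpos xs N} in
     if m = N then -1
     else if K = N - 1 then 1 / real (N - 1)
     else if tpos xs m = tpos xs N then (1 - eps) / real K
     else eps / real (N - K - 1))"

definition payoff :: "nat \<Rightarrow> real \<Rightarrow> real \<Rightarrow> nat \<Rightarrow> 'v profile \<Rightarrow> 'v state \<Rightarrow> real" where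
  "payoff N gam eps m prof s0 =
    (if \<exists>t. is_capture N (state_at N prof s0 t)
     then (let t = (LEAST t. is_capture N (state_at N prof s0 t)) in
           reward N eps m (fst (state_at N prof s0 t)) * gam ^ t)
     else 0)"

text \<open>An optimal strategy pair of \<Gamma>^m_N, optimal from every initial noncapture
state: P_m controls token m (strategy prof m), P_{-m} controls the other tokens.\<close>
definition optimal_pair ::
  "nat \<Rightarrow> 'v set \<Rightarrow> ('v \<Rightarrow> 'v \<Rightarrow> bool) \<Rightarrow> real \<Rightarrow> real \<Rightarrow> nat \<Rightarrow> 'v profile \<Rightarrow> bool" where
  "optimal_pair N V E gam eps m prof \<longleftrightarrow>
     legal_profile N E prof \<and>
     (\<forall>s0. valid_state N V s0 \<and> \<not> is_capture N s0 \<longrightarrow>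
        (\<forall>prof'. legal_profile N E prof' \<longrightarrow>
            payoff N gam eps m prof s0 \<le> payoff N gam eps m (prof'(m := prof m)) s0
          \<and> payoff N gam eps m (prof(m := prof' m)) s0 \<le> payoff N gam eps m prof s0))"

definition posprof :: "(nat \<Rightarrow> 'v state \<Rightarrow> 'v) \<Rightarrow> 'v profile" where
  "posprof phi = (\<lambda>n h. phi n (last h))"

definition pos_optimal ::
  "nat \<Rightarrow> 'v set \<Rightarrow> ('v \<Rightarrow> 'v \<Rightarrow> bool) \<Rightarrow> real \<Rightarrow> real \<Rightarrow> nat \<Rightarrow> (nat \<Rightarrow> 'v state \<Rightarrow> 'v) \<Rightarrow> bool" where
  "pos_optimal N V E gam eps m phi \<longleftrightarrow> optimal_pair N V E gam eps m (posprof phi)"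

text \<open>CR-optimal strategies of token n (the set \<widehat>\<Sigma>^n): components of optimal pure
positional strategy pairs of \<Gamma>^N_N.\<close>
definition cr_optimal ::
  "nat \<Rightarrow> 'v set \<Rightarrow> ('v \<Rightarrow> 'v \<Rightarrow> bool) \<Rightarrow> real \<Rightarrow> real \<Rightarrow> nat \<Rightarrow> ('v state \<Rightarrow> 'v) \<Rightarrow> bool" where
  "cr_optimal N V E gam eps n sigma \<longleftrightarrow> (\<exists>phi. pos_optimal N V E gam eps N phi \<and> phi n = sigma)"

inductive reach :: "nat \<Rightarrow> ('v \<Rightarrow> 'v \<Rightarrow> bool) \<Rightarrow> 'v state \<Rightarrow> 'v state \<Rightarrow> bool"
  for N E s0 where
  reach_refl: "reach N E s0 s0"
| reach_step: "reach N E s0 s \<Longrightarrow> \<not> is_capture N s \<Longrightarrow> v \<in> cnbhd E (tpos (fst s) (snd s))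
                 \<Longrightarrow> reach N E s0 (move N s v)"

text \<open>Positional trigger strategies profile, determined by the choice
phi m n = \<phi>^n_m (strategy of token n in the chosen optimal pair of \<Gamma>^m_N).\<close>
definition positional_trigger ::
  "nat \<Rightarrow> 'v set \<Rightarrow> ('v \<Rightarrow> 'v \<Rightarrow> bool) \<Rightarrow> real \<Rightarrow> real \<Rightarrow> 'v state
     \<Rightarrow> (nat \<Rightarrow> nat \<Rightarrow> 'v state \<Rightarrow> 'v) \<Rightarrow> bool" where
  "positional_trigger N V E gam eps s0 phi \<longleftrightarrow>
     (\<forall>n\<in>{1..N}. \<forall>m\<in>{1..N}. \<exists>sigma. cr_optimal N V E gam eps n sigma \<and>
        (\<forall>s. reach N E s0 s \<and> snd s = n \<and> \<not> is_capture N s \<longrightarrow> phi m n s = sigma s))"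

definition force_capture :: "nat \<Rightarrow> ('v \<Rightarrow> 'v \<Rightarrow> bool) \<Rightarrow> nat set \<Rightarrow> 'v state \<Rightarrow> bool" where
  "force_capture N E K s \<longleftrightarrow>
     (\<exists>prof. (\<forall>n\<in>K. legal_strat N E n (prof n)) \<and>
        (\<forall>prof'. legal_profile N E prof' \<longrightarrow>
           (\<exists>t. is_capture N (state_at N (\<lambda>n. if n \<in> K then prof n else prof' n) s t))))"

text \<open>c(G|s) = \<infinity>: no nonempty set of at most N-1 cops can force a capture.\<close>
definition state_cop_infinite :: "nat \<Rightarrow> ('v \<Rightarrow> 'v \<Rightarrow> bool) \<Rightarrow> 'v state \<Rightarrow> bool" where
  "state_cop_infinite N E s \<longleftrightarrow>
     (\<forall>K. K \<subseteq> {1..N-1} \<and> K \<noteq> {} \<longrightarrow> \<not> force_capture N E K s)"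

text \<open>Classical game with k cops: cops place (c0), robber places (r0, seeing c0),
then alternately all cops move simultaneously and the robber moves.  States are
(cop positions, robber position, cops-to-move flag).\<close>
type_synonym 'v cstate = "'v list \<times> 'v \<times> bool"

fun cl_play :: "'v list \<Rightarrow> ('v list \<Rightarrow> 'v) \<Rightarrow> ('v cstate list \<Rightarrow> 'v list)
                  \<Rightarrow> ('v cstate list \<Rightarrow> 'v) \<Rightarrow> nat \<Rightarrow> 'v cstate list" where
  "cl_play c0 r0 cm rm 0 = [(c0, r0 c0, True)]"
| "cl_play c0 r0 cm rm (Suc t) =
     (let h = cl_play c0 r0 cm rm t; s = last h in
      if snd (snd s) then h @ [(cm h, fst (snd s), False)]
      else h @ [(fst s, rm h, True)])"

definition cops_win :: "'v set \<Rightarrow> ('v \<Rightarrow> 'v \<Rightarrow> bool) \<Rightarrow> nat \<Rightarrow> bool" where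
  "cops_win V E k \<longleftrightarrow>
    (\<exists>c0 cm. length c0 = k \<and> set c0 \<subseteq> V \<and>
      (\<forall>h. h \<noteq> [] \<and> snd (snd (last h)) \<and> length (fst (last h)) = k \<longrightarrow>
          length (cm h) = k \<and> (\<forall>i<k. cm h ! i \<in> cnbhd E (fst (last h) ! i))) \<and>
      (\<forall>r0 rm. (\<forall>c. r0 c \<in> V) \<and>
         (\<forall>h. h \<noteq> [] \<and> \<not> snd (snd (last h)) \<longrightarrow> rm h \<in> cnbhd E (fst (snd (last h))))
         \<longrightarrow> (\<exists>t. fst (snd (last (cl_play c0 r0 cm rm t))) \<in> set (fst (last (cl_play c0 r0 cm rm t))))))"

definition cop_number :: "'v set \<Rightarrow> ('v \<Rightarrow> 'v \<Rightarrow> bool) \<Rightarrow> nat" where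
  "cop_number V E = (LEAST k. cops_win V E k)"

definition in_G2 :: "nat \<Rightarrow> 'v set \<Rightarrow> ('v \<Rightarrow> 'v \<Rightarrow> bool) \<Rightarrow> bool" where
  "in_G2 N V E \<longleftrightarrow> N - 1 < cop_number V E \<and>
     (\<forall>s. valid_state N V s \<and> snd s = N \<and> \<not> is_capture N s \<longrightarrow> state_cop_infinite N E s)"

end

theory Submission imports Defs begin

lemma pow_small:
  fixes g x :: real assumes "0 < g" "g < 1" "\<forall>t. x \<le> g ^ t" shows "x \<le> 0"
proof (rule ccontr)
  assume "\<not> x \<le> 0" then have "0 < x" by simp
  from real_arch_pow_inv[OF this assms(2)] obtain n where "g ^ n < x" by blast
  with assms(3) show False by (metis not_le)
qed

lemma play_facts:
  shows "state_at N P s0 0 = s0"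
    and "state_at N P s0 (Suc t) = move N (state_at N P s0 t) (P (snd (state_at N P s0 t)) (play N P s0 t))"
    and "play N P s0 t \<noteq> []"
    and "last (play N P s0 t) = state_at N P s0 t"
  by (cases t; simp add: state_at_def Let_def)+

lemma legal_move_at:
  assumes "legal_profile N E P" "snd (state_at N P s0 t) \<in> {1..N}" "\<not> is_capture N (state_at N P s0 t)"
  shows "P (snd (state_at N P s0 t)) (play N P s0 t) \<in> cnbhd E (tpos (fst (state_at N P s0 t)) (snd (state_at N P s0 t)))"
proof -
  have "legal_strat N E (snd (state_at N P s0 t)) (P (snd (state_at N P s0 t)))"
    using assms(1,2) by (simp add: legal_profile_def)
  then show ?thesis using play_facts(3,4)[of N P s0 t] assms(3) unfolding legal_strat_def by metis
qed

lemma UB: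
  fixes W :: "'v state \<Rightarrow> real" and sg :: "nat \<Rightarrow> 'v state \<Rightarrow> 'v"
  assumes leg: "legal_profile N E P"
    and fx: "\<forall>n\<in>F. P n = (\<lambda>h. sg n (last h))"
    and inv0: "Inv s0" and nc0: "\<not> is_capture N s0"
    and invsnd: "\<forall>s. Inv s \<longrightarrow> snd s \<in> {1..N}"
    and stp: "\<forall>s v. Inv s \<and> \<not> is_capture N s \<and> v \<in> cnbhd E (tpos (fst s) (snd s))
        \<and> (snd s \<in> F \<longrightarrow> v = sg (snd s) s) \<longrightarrow>
       (is_capture N (move N s v) \<longrightarrow> gam * reward N eps m (fst (move N s v)) \<le> W s) \<and>
       (\<not> is_capture N (move N s v) \<longrightarrow> Inv (move N s v) \<and> gam * W (move N s v) \<le> W s)"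
    and bnd: "\<forall>s. Inv s \<longrightarrow> -1 \<le> W s"
    and g: "0 < gam" "gam < 1"
  shows "payoff N gam eps m P s0 \<le> W s0"
proof -
  define st where "st = state_at N P s0"
  note pf = play_facts[of N P s0]
  have st0: "st 0 = s0" by (simp add: st_def pf)
  have mv: "P (snd (st t)) (play N P s0 t) \<in> cnbhd E (tpos (fst (st t)) (snd (st t)))
     \<and> (snd (st t) \<in> F \<longrightarrow> P (snd (st t)) (play N P s0 t) = sg (snd (st t)) (st t))"
    if a: "Inv (st t)" "\<not> is_capture N (st t)" for t
  proof -
    have "snd (st t) \<in> {1..N}" using a invsnd by blast
    then have "P (snd (st t)) (play N P s0 t) \<in> cnbhd E (tpos (fst (st t)) (snd (st t)))"
      using legal_move_at[OF leg] a(2) unfolding st_def by blast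
    moreover have "snd (st t) \<in> F \<longrightarrow> P (snd (st t)) (play N P s0 t) = sg (snd (st t)) (st t)"
      using fx pf(4)[of t] unfolding st_def by auto
    ultimately show ?thesis by blast
  qed
  have stS: "st (Suc t) = move N (st t) (P (snd (st t)) (play N P s0 t))" for t
    by (simp add: st_def pf)
  have key: "(\<forall>i\<le>t. \<not> is_capture N (st i)) \<longrightarrow> Inv (st t) \<and> gam ^ t * W (st t) \<le> W s0" for t
  proof (induction t)
    case 0 show ?case using inv0 st0 by simp
  next
    case (Suc t)
    show ?case
    proof
      assume h: "\<forall>i\<le>Suc t. \<not> is_capture N (st i)"
      then have IH: "Inv (st t)" "gam ^ t * W (st t) \<le> W s0" using Suc.IH by auto
      have nct: "\<not> is_capture N (st t)" using h by auto
      have ncs: "\<not> is_capture N (st (Suc t))" using h by blast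
      have "Inv (st (Suc t)) \<and> gam * W (st (Suc t)) \<le> W (st t)"
        using stp mv[OF IH(1) nct] IH(1) nct ncs unfolding stS by blast
      moreover then have "gam ^ t * (gam * W (st (Suc t))) \<le> gam ^ t * W (st t)"
        using g by (intro mult_left_mono) auto
      ultimately show "Inv (st (Suc t)) \<and> gam ^ Suc t * W (st (Suc t)) \<le> W s0"
        using IH(2) by (simp add: algebra_simps)
    qed
  qed
  show ?thesis
  proof (cases "\<exists>t. is_capture N (st t)")
    case True
    define T where "T = (LEAST t. is_capture N (st t))"
    have cT: "is_capture N (st T)" using True LeastI_ex T_def by metis
    have bef: "i < T \<Longrightarrow> \<not> is_capture N (st i)" for i using not_less_Least T_def by blast
    have "T \<noteq> 0" using cT nc0 st0 by metis
    then obtain t where T: "T = Suc t" by (cases T) auto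
    have all: "\<forall>i\<le>t. \<not> is_capture N (st i)" using bef T by auto
    with key have I: "Inv (st t)" "gam ^ t * W (st t) \<le> W s0" by auto
    have nct: "\<not> is_capture N (st t)" using all by auto
    have "gam * reward N eps m (fst (st T)) \<le> W (st t)"
      using stp mv[OF I(1) nct] I(1) nct cT unfolding T stS by blast
    then have "gam ^ t * (gam * reward N eps m (fst (st T))) \<le> gam ^ t * W (st t)"
      using g by (intro mult_left_mono) auto
    then have "reward N eps m (fst (st T)) * gam ^ T \<le> W s0" using I(2) T by (simp add: algebra_simps)
    moreover have "payoff N gam eps m P s0 = reward N eps m (fst (st T)) * gam ^ T"
      unfolding payoff_def using True by (simp add: st_def T_def Let_def)
    ultimately show ?thesis by simp
  next
    case False
    then have p: "payoff N gam eps m P s0 = 0" by (simp add: payoff_def st_def)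
    have "\<forall>t. - W s0 \<le> gam ^ t"
    proof
      fix t
      have a: "Inv (st t)" "gam ^ t * W (st t) \<le> W s0" using key False by auto
      moreover have "-1 \<le> W (st t)" using bnd a(1) by blast
      ultimately have "gam ^ t * (-1) \<le> gam ^ t * W (st t)" using g by (intro mult_left_mono) auto
      then show "- W s0 \<le> gam ^ t" using a(2) by simp
    qed
    then have "- W s0 \<le> 0" using pow_small[OF g] by blast
    with p show ?thesis by simp
  qed
qed

lemma LB:
  fixes W :: "'v state \<Rightarrow> real" and sg :: "nat \<Rightarrow> 'v state \<Rightarrow> 'v"
  assumes leg: "legal_profile N E P"
    and fx: "\<forall>n\<in>F. P n = (\<lambda>h. sg n (last h))"
    and inv0: "Inv s0" and nc0: "\<not> is_capture N s0"
    and invsnd: "\<forall>s. Inv s \<longrightarrow> snd s \<in> {1..N}"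
    and stp: "\<forall>s v. Inv s \<and> \<not> is_capture N s \<and> v \<in> cnbhd E (tpos (fst s) (snd s))
        \<and> (snd s \<in> F \<longrightarrow> v = sg (snd s) s) \<longrightarrow>
       (is_capture N (move N s v) \<longrightarrow> W s \<le> gam * reward N eps m (fst (move N s v))) \<and>
       (\<not> is_capture N (move N s v) \<longrightarrow> Inv (move N s v) \<and> W s \<le> gam * W (move N s v))"
    and bnd: "\<forall>s. Inv s \<longrightarrow> W s \<le> 1"
    and g: "0 < gam" "gam < 1"
  shows "W s0 \<le> payoff N gam eps m P s0"
proof -
  define st where "st = state_at N P s0"
  note pf = play_facts[of N P s0]
  have st0: "st 0 = s0" by (simp add: st_def pf)
  have mv: "P (snd (st t)) (play N P s0 t) \<in> cnbhd E (tpos (fst (st t)) (snd (st t)))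
     \<and> (snd (st t) \<in> F \<longrightarrow> P (snd (st t)) (play N P s0 t) = sg (snd (st t)) (st t))"
    if a: "Inv (st t)" "\<not> is_capture N (st t)" for t
  proof -
    have "snd (st t) \<in> {1..N}" using a invsnd by blast
    then have "P (snd (st t)) (play N P s0 t) \<in> cnbhd E (tpos (fst (st t)) (snd (st t)))"
      using legal_move_at[OF leg] a(2) unfolding st_def by blast
    moreover have "snd (st t) \<in> F \<longrightarrow> P (snd (st t)) (play N P s0 t) = sg (snd (st t)) (st t)"
      using fx pf(4)[of t] unfolding st_def by auto
    ultimately show ?thesis by blast
  qed
  have stS: "st (Suc t) = move N (st t) (P (snd (st t)) (play N P s0 t))" for t
    by (simp add: st_def pf)
  have key: "(\<forall>i\<le>t. \<not> is_capture N (st i)) \<longrightarrow> Inv (st t) \<and> W s0 \<le> gam ^ t * W (st t)" for t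
  proof (induction t)
    case 0 show ?case using inv0 st0 by simp
  next
    case (Suc t)
    show ?case
    proof
      assume h: "\<forall>i\<le>Suc t. \<not> is_capture N (st i)"
      then have IH: "Inv (st t)" "W s0 \<le> gam ^ t * W (st t)" using Suc.IH by auto
      have nct: "\<not> is_capture N (st t)" using h by auto
      have ncs: "\<not> is_capture N (st (Suc t))" using h by blast
      have "Inv (st (Suc t)) \<and> W (st t) \<le> gam * W (st (Suc t))"
        using stp mv[OF IH(1) nct] IH(1) nct ncs unfolding stS by blast
      moreover then have "gam ^ t * W (st t) \<le> gam ^ t * (gam * W (st (Suc t)))"
        using g by (intro mult_left_mono) auto
      ultimately show "Inv (st (Suc t)) \<and> W s0 \<le> gam ^ Suc t * W (st (Suc t))"
        using IH(2) by (simp add: algebra_simps)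
    qed
  qed
  show ?thesis
  proof (cases "\<exists>t. is_capture N (st t)")
    case True
    define T where "T = (LEAST t. is_capture N (st t))"
    have cT: "is_capture N (st T)" using True LeastI_ex T_def by metis
    have bef: "i < T \<Longrightarrow> \<not> is_capture N (st i)" for i using not_less_Least T_def by blast
    have "T \<noteq> 0" using cT nc0 st0 by metis
    then obtain t where T: "T = Suc t" by (cases T) auto
    have all: "\<forall>i\<le>t. \<not> is_capture N (st i)" using bef T by auto
    with key have I: "Inv (st t)" "W s0 \<le> gam ^ t * W (st t)" by auto
    have nct: "\<not> is_capture N (st t)" using all by auto
    have "W (st t) \<le> gam * reward N eps m (fst (st T))"
      using stp mv[OF I(1) nct] I(1) nct cT unfolding T stS by blast
    then have "gam ^ t * W (st t) \<le> gam ^ t * (gam * reward N eps m (fst (st T)))"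
      using g by (intro mult_left_mono) auto
    then have "W s0 \<le> reward N eps m (fst (st T)) * gam ^ T" using I(2) T by (simp add: algebra_simps)
    moreover have "payoff N gam eps m P s0 = reward N eps m (fst (st T)) * gam ^ T"
      unfolding payoff_def using True by (simp add: st_def T_def Let_def)
    ultimately show ?thesis by simp
  next
    case False
    then have p: "payoff N gam eps m P s0 = 0" by (simp add: payoff_def st_def)
    have "\<forall>t. W s0 \<le> gam ^ t"
    proof
      fix t
      have a: "Inv (st t)" "W s0 \<le> gam ^ t * W (st t)" using key False by auto
      moreover have "W (st t) \<le> 1" using bnd a(1) by blast
      ultimately have "gam ^ t * W (st t) \<le> gam ^ t * 1" using g by (intro mult_left_mono) auto
      then show "W s0 \<le> gam ^ t" using a(2) by simp
    qed
    then have "W s0 \<le> 0" using pow_small[OF g] by blast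
    with p show ?thesis by simp
  qed
qed


locale scar =
  fixes N :: nat and V :: "'v set" and E :: "'v \<Rightarrow> 'v \<Rightarrow> bool"
  assumes N3: "N \<ge> 3" and G: "fsc_graph V E"
begin

definition adj :: "'v state \<Rightarrow> nat \<Rightarrow> bool" where
  "adj s k \<longleftrightarrow> tpos (fst s) k \<in> cnbhd E (tpos (fst s) N)"
definition greedy :: "nat \<Rightarrow> 'v state \<Rightarrow> 'v" where
  "greedy n s = (if adj s n then tpos (fst s) N else tpos (fst s) n)"
definition safe_ex :: "'v state \<Rightarrow> bool" where
  "safe_ex s \<longleftrightarrow> (\<exists>v. v \<in> cnbhd E (tpos (fst s) N) \<and> (\<forall>i\<in>{1..N-1}. tpos (fst s) i \<notin> cnbhd E v))"
definition safe :: "'v state \<Rightarrow> 'v" where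
  "safe s = (if safe_ex s then (SOME v. v \<in> cnbhd E (tpos (fst s) N) \<and> (\<forall>i\<in>{1..N-1}. tpos (fst s) i \<notin> cnbhd E v))
             else tpos (fst s) N)"
definition psi :: "nat \<Rightarrow> 'v state \<Rightarrow> 'v" where
  "psi n s = (if n = N then safe s else greedy n s)"
definition hasfa :: "'v state \<Rightarrow> bool" where
  "hasfa s \<longleftrightarrow> (\<exists>k. snd s \<le> k \<and> k < N \<and> adj s k)"
definition fa :: "'v state \<Rightarrow> nat" where
  "fa s = (LEAST k. snd s \<le> k \<and> k < N \<and> adj s k)"
definition VN :: "real \<Rightarrow> 'v state \<Rightarrow> real" where
  "VN g s = (if hasfa s then - (g ^ (fa s - snd s + 1)) else 0)"
definition Vm :: "real \<Rightarrow> nat \<Rightarrow> 'v state \<Rightarrow> real" where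
  "Vm g m s = (if hasfa s \<and> fa s = m then g ^ (m - snd s + 1) else 0)"

lemma cn_self: "x \<in> cnbhd E x" by (simp add: cnbhd_def)
lemma Gsym: "E x y \<Longrightarrow> E y x" using G unfolding fsc_graph_def by blast
lemma GV: "E x y \<Longrightarrow> y \<in> V" using G unfolding fsc_graph_def by blast
lemma cn_sym: "x \<in> cnbhd E y \<longleftrightarrow> y \<in> cnbhd E x"
  using Gsym by (auto simp: cnbhd_def)
lemma cn_V: "x \<in> V \<Longrightarrow> y \<in> cnbhd E x \<Longrightarrow> y \<in> V"
  using GV by (auto simp: cnbhd_def)

lemma tpos_in: assumes "valid_state N V s" "k \<in> {1..N}" shows "tpos (fst s) k \<in> V"
proof -
  have "k - 1 < length (fst s)" using assms by (auto simp: valid_state_def)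
  then have "fst s ! (k - 1) \<in> set (fst s)" by (rule nth_mem)
  then show ?thesis using assms by (auto simp: valid_state_def tpos_def)
qed

lemma tpos_move: assumes "valid_state N V s" "k \<in> {1..N}"
  shows "tpos (fst (move N s v)) k = (if k = snd s then v else tpos (fst s) k)"
  using assms unfolding valid_state_def tpos_def move_def by (auto simp: nth_list_update)

lemma valid_move: assumes "valid_state N V s" "v \<in> cnbhd E (tpos (fst s) (snd s))"
  shows "valid_state N V (move N s v)"
proof -
  have "v \<in> V" using assms tpos_in[OF assms(1), of "snd s"] cn_V by (auto simp: valid_state_def)
  then show ?thesis using assms(1) set_update_subset_insert[of "fst s" "snd s - 1" v] N3
    by (auto simp: valid_state_def move_def next_tok_def)
qed

lemma snd_move_rob: "snd s = N \<Longrightarrow> snd (move N s v) = 1"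
  by (simp add: move_def next_tok_def)
lemma snd_move_cop: "snd s < N \<Longrightarrow> snd (move N s v) = Suc (snd s)"
  by (simp add: move_def next_tok_def)

lemma valid_snd: "valid_state N V s \<Longrightarrow> 1 \<le> snd s \<and> snd s \<le> N"
  by (simp add: valid_state_def)

lemma stepA:
  assumes vs: "valid_state N V s" and nc: "\<not> is_capture N s" and n: "snd s < N"
    and na: "\<not> adj s (snd s)" and v: "v \<in> cnbhd E (tpos (fst s) (snd s))"
  shows "\<not> is_capture N (move N s v)" "snd (move N s v) = Suc (snd s)"
    "valid_state N V (move N s v)"
    "\<And>k. k \<in> {1..N} \<Longrightarrow> k \<noteq> snd s \<Longrightarrow> tpos (fst (move N s v)) k = tpos (fst s) k"
    "tpos (fst (move N s v)) N = tpos (fst s) N"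
proof -
  have n1: "1 \<le> snd s" using valid_snd[OF vs] by simp
  show tk: "\<And>k. k \<in> {1..N} \<Longrightarrow> k \<noteq> snd s \<Longrightarrow> tpos (fst (move N s v)) k = tpos (fst s) k"
    using tpos_move[OF vs] by simp
  show tN: "tpos (fst (move N s v)) N = tpos (fst s) N" using tk[of N] n N3 by simp
  have vr: "v \<noteq> tpos (fst s) N"
  proof
    assume "v = tpos (fst s) N"
    then have "tpos (fst s) (snd s) \<in> cnbhd E (tpos (fst s) N)" using v cn_sym by simp
    then show False using na by (simp add: adj_def)
  qed
  show "\<not> is_capture N (move N s v)"
  proof
    assume "is_capture N (move N s v)"
    then obtain i where i: "i \<in> {1..N-1}" "tpos (fst (move N s v)) i = tpos (fst (move N s v)) N"
      by (auto simp: is_capture_def)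
    show False
    proof (cases "i = snd s")
      case True
      then have "tpos (fst (move N s v)) i = v" using tpos_move[OF vs, of i] i(1) by auto
      then show False using i(2) tN vr by simp
    next
      case False
      then have "tpos (fst s) i = tpos (fst s) N" using tk[of i] i tN by auto
      then show False using nc i(1) by (auto simp: is_capture_def)
    qed
  qed
  show "snd (move N s v) = Suc (snd s)" using snd_move_cop[OF n] .
  show "valid_state N V (move N s v)" using valid_move[OF vs v] .
qed

lemma stepA_pred:
  assumes vs: "valid_state N V s" and nc: "\<not> is_capture N s" and n: "snd s < N"
    and na: "\<not> adj s (snd s)" and v: "v \<in> cnbhd E (tpos (fst s) (snd s))"
  shows "(\<lambda>k. snd (move N s v) \<le> k \<and> k < N \<and> adj (move N s v) k) = (\<lambda>k. snd s \<le> k \<and> k < N \<and> adj s k)"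
proof
  fix k
  note A = stepA[OF assms]
  have n1: "1 \<le> snd s" using valid_snd[OF vs] by simp
  show "(snd (move N s v) \<le> k \<and> k < N \<and> adj (move N s v) k) = (snd s \<le> k \<and> k < N \<and> adj s k)"
  proof (cases "k = snd s")
    case True then show ?thesis using na A(2) by simp
  next
    case False
    have "1 \<le> k \<Longrightarrow> k < N \<Longrightarrow> adj (move N s v) k = adj s k"
      using A(4)[of k] A(5) False by (auto simp: adj_def)
    then show ?thesis using A(2) n1 False by auto
  qed
qed

lemma stepA_fa:
  assumes "valid_state N V s" "\<not> is_capture N s" "snd s < N"
    "\<not> adj s (snd s)" "v \<in> cnbhd E (tpos (fst s) (snd s))"
  shows "hasfa (move N s v) = hasfa s" "fa (move N s v) = fa s"
proof -
  note P = stepA_pred[OF assms]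
  show "hasfa (move N s v) = hasfa s" unfolding hasfa_def P by (rule refl)
  show "fa (move N s v) = fa s" unfolding fa_def P by (rule refl)
qed

lemma fa_gt: assumes "hasfa s" "\<not> adj s (snd s)"
  shows "snd s < fa s" "fa s < N" "adj s (fa s)"
proof -
  have "snd s \<le> fa s \<and> fa s < N \<and> adj s (fa s)"
    using assms(1) unfolding hasfa_def fa_def by (rule LeastI_ex)
  then show "snd s < fa s" "fa s < N" "adj s (fa s)" using assms(2) by (auto simp: le_less)
qed

lemma fa_le: assumes "snd s \<le> k" "k < N" "adj s k" shows "hasfa s" "fa s \<le> k"
  using assms unfolding hasfa_def fa_def by (auto intro: Least_le)

lemma fa_eq: assumes "snd s < N" "adj s (snd s)" shows "hasfa s" "fa s = snd s"
proof -
  show "hasfa s" using assms by (auto simp: hasfa_def)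
  show "fa s = snd s" unfolding fa_def using assms by (intro Least_equality) auto
qed

lemma nofa_rob: "snd s = N \<Longrightarrow> \<not> hasfa s" by (auto simp: hasfa_def)

lemma stepA_V:
  assumes "valid_state N V s" "\<not> is_capture N s" "snd s < N"
    "\<not> adj s (snd s)" "v \<in> cnbhd E (tpos (fst s) (snd s))"
  shows "VN g s = g * VN g (move N s v)" "Vm g m s = g * Vm g m (move N s v)"
proof -
  note F = stepA_fa[OF assms] and A = stepA[OF assms]
  have e: "fa s - snd s + 1 = Suc (fa s - Suc (snd s) + 1)" if "hasfa s"
    using fa_gt[OF that assms(4)] by arith
  show "VN g s = g * VN g (move N s v)" unfolding VN_def F A(2) using e by simp
  show "Vm g m s = g * Vm g m (move N s v)" unfolding Vm_def F A(2) using e by auto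
qed

lemma stepB:
  assumes vs: "valid_state N V s" and nc: "\<not> is_capture N s" and n: "snd s < N"
  shows "is_capture N (move N s (tpos (fst s) N))"
    "m \<in> {1..N-1} \<Longrightarrow> reward N 0 m (fst (move N s (tpos (fst s) N))) = (if m = snd s then 1 else 0)"
proof -
  define s' where "s' = move N s (tpos (fst s) N)"
  have n1: "1 \<le> snd s" using valid_snd[OF vs] by simp
  have tN: "tpos (fst s') N = tpos (fst s) N" using tpos_move[OF vs, of N] n N3 by (simp add: s'_def)
  have tn: "tpos (fst s') (snd s) = tpos (fst s) N" using tpos_move[OF vs, of "snd s"] n n1 by (simp add: s'_def)
  have tk: "k \<in> {1..N} \<Longrightarrow> k \<noteq> snd s \<Longrightarrow> tpos (fst s') k = tpos (fst s) k" for k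
    using tpos_move[OF vs, of k] by (simp add: s'_def)
  have set: "{i\<in>{1..N-1}. tpos (fst s') i = tpos (fst s') N} = {snd s}"
  proof -
    have "i \<in> {1..N-1} \<Longrightarrow> i \<noteq> snd s \<Longrightarrow> tpos (fst s') i \<noteq> tpos (fst s') N" for i
      using tk[of i] tN nc by (auto simp: is_capture_def)
    then show ?thesis using tn tN n n1 by auto
  qed
  have "is_capture N s'" using set unfolding is_capture_def by blast
  then show "is_capture N (move N s (tpos (fst s) N))" by (simp add: s'_def)
  show "reward N 0 m (fst (move N s (tpos (fst s) N))) = (if m = snd s then 1 else 0)"
    if m: "m \<in> {1..N-1}"
  proof -
  have eq: "(tpos (fst s') m = tpos (fst s') N) = (m = snd s)" using set m by blast
  have K: "card {i\<in>{1..N-1}. tpos (fst s') i = tpos (fst s') N} = 1" using set by simp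
  have mN: "m \<noteq> N" "(1::nat) \<noteq> N - 1" using m N3 by auto
  have "reward N 0 m (fst s') = (if m = snd s then 1 else 0)"
    unfolding reward_def Let_def K using mN eq by simp
  then show "reward N 0 m (fst (move N s (tpos (fst s) N))) = (if m = snd s then 1 else 0)"
    by (simp add: s'_def)
  qed
qed

lemma inv_le1: "1 / real (k::nat) \<le> 1" by (cases k) auto

lemma reward_bnd: assumes "m \<noteq> N" shows "0 \<le> reward N 0 m xs" "reward N 0 m xs \<le> 1"
  using assms N3 inv_le1 by (auto simp: reward_def Let_def)

lemma reward_N: "reward N eps N xs = -1" by (simp add: reward_def)

lemma safe_prop: assumes "safe_ex s"
  shows "safe s \<in> cnbhd E (tpos (fst s) N)" "\<forall>i\<in>{1..N-1}. tpos (fst s) i \<notin> cnbhd E (safe s)"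
proof -
  let ?P = "\<lambda>v. v \<in> cnbhd E (tpos (fst s) N) \<and> (\<forall>i\<in>{1..N-1}. tpos (fst s) i \<notin> cnbhd E v)"
  have "\<exists>v. ?P v" using assms by (simp add: safe_ex_def)
  then have "?P (SOME v. ?P v)" by (rule someI_ex)
  then have "safe s \<in> cnbhd E (tpos (fst s) N) \<and> (\<forall>i\<in>{1..N-1}. tpos (fst s) i \<notin> cnbhd E (safe s))"
    using assms unfolding safe_def by simp
  then show "safe s \<in> cnbhd E (tpos (fst s) N)" "\<forall>i\<in>{1..N-1}. tpos (fst s) i \<notin> cnbhd E (safe s)" by auto
qed

lemma rob_move: assumes vs: "valid_state N V s" and r: "snd s = N"
  shows "\<And>k. k \<in> {1..N-1} \<Longrightarrow> tpos (fst (move N s v)) k = tpos (fst s) k"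
    "tpos (fst (move N s v)) N = v" "snd (move N s v) = 1"
  using tpos_move[OF vs] r N3 snd_move_rob[OF r] by auto

lemma stepD:
  assumes vs: "valid_state N V s" and r: "snd s = N" and se: "safe_ex s"
  shows "\<not> is_capture N (move N s (safe s))" "\<not> hasfa (move N s (safe s))"
proof -
  note R = rob_move[OF vs r, where v="safe s"] and S = safe_prop[OF se]
  show "\<not> is_capture N (move N s (safe s))"
  proof
    assume "is_capture N (move N s (safe s))"
    then obtain i where i: "i \<in> {1..N-1}" "tpos (fst (move N s (safe s))) i = tpos (fst (move N s (safe s))) N"
      unfolding is_capture_def by blast
    then have "tpos (fst s) i = safe s" using R(1)[OF i(1)] R(2) by simp
    then show False using S(2) i(1) cn_self[of "safe s"] by metis
  qed
  show "\<not> hasfa (move N s (safe s))"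
  proof
    assume "hasfa (move N s (safe s))"
    then obtain k where k: "snd (move N s (safe s)) \<le> k" "k < N" "adj (move N s (safe s)) k"
      unfolding hasfa_def by blast
    then have k1: "k \<in> {1..N-1}" using R(3) by auto
    then have "tpos (fst s) k \<in> cnbhd E (safe s)" using k(3) R(1)[OF k1] R(2) by (simp add: adj_def)
    then show False using S(2) k1 by blast
  qed
qed

lemma psi_legal: "psi n s \<in> cnbhd E (tpos (fst s) n)"
  using safe_prop[of s] cn_self cn_sym
  by (auto simp: psi_def greedy_def adj_def safe_def)

lemma legal_psi: "legal_strat N E n (posprof psi n)"
  unfolding legal_strat_def posprof_def using psi_legal by auto

lemma legal_upd: "legal_profile N E P \<Longrightarrow> legal_profile N E Q \<Longrightarrow> legal_profile N E (P(m := Q m))"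
  by (auto simp: legal_profile_def)


lemma legal_posprof: "legal_profile N E (posprof psi)"
  using legal_psi by (simp add: legal_profile_def)

lemma VN_bnd: "0 \<le> g \<Longrightarrow> g \<le> 1 \<Longrightarrow> -1 \<le> VN g s \<and> VN g s \<le> 0"
  unfolding VN_def using power_le_one[of g "fa s - snd s + 1"] zero_le_power[of g "fa s - snd s + 1"] by auto
lemma Vm_bnd: "0 \<le> g \<Longrightarrow> g \<le> 1 \<Longrightarrow> 0 \<le> Vm g m s \<and> Vm g m s \<le> 1"
  unfolding Vm_def using power_le_one[of g "m - snd s + 1"] zero_le_power[of g "m - snd s + 1"] by auto

lemma half_pow: "((1::real)/2) ^ N \<le> ((1::real)/2) ^ k" if "k \<le> N" for k
  using that by (intro power_decreasing) auto

lemma safe_exists: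
  assumes g2: "in_G2 N V E" and vs: "valid_state N V s" and nc: "\<not> is_capture N s" and r: "snd s = N"
  shows "safe_ex s"
proof (rule ccontr)
  assume ns: "\<not> safe_ex s"
  have "state_cop_infinite N E s" using g2 vs nc r unfolding in_G2_def by blast
  moreover have "{1..N-1} \<noteq> {}" using N3 by auto
  ultimately have nf: "\<not> force_capture N E {1..N-1} s" unfolding state_cop_infinite_def by blast
  have "force_capture N E {1..N-1} s"
    unfolding force_capture_def
  proof (intro exI[where x="posprof psi"] conjI allI impI)
    show "\<forall>n\<in>{1..N-1}. legal_strat N E n (posprof psi n)" using legal_psi by blast
    fix prof' :: "'v profile" assume lp: "legal_profile N E prof'"
    define P where "P = (\<lambda>n. if n \<in> {1..N-1} then posprof psi n else prof' n)"
    have legP: "legal_profile N E P"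
      using lp legal_psi unfolding P_def legal_profile_def by auto
    have fxP: "\<forall>n\<in>{1..N-1}. P n = (\<lambda>h. psi n (last h))" by (simp add: P_def posprof_def)
    define Inv where "Inv = (\<lambda>s. valid_state N V s \<and> (if snd s = N then \<not> safe_ex s else hasfa s))"
    define W where "W = (\<lambda>s. if snd s = N then - (((1::real)/2) ^ N) else VN (1/2) s)"
    have "payoff N (1/2) 0 N P s \<le> W s"
    proof (rule UB[OF legP fxP, where Inv = Inv])
      show "Inv s" using vs r ns by (simp add: Inv_def)
      show "\<not> is_capture N s" by fact
      show "\<forall>s. Inv s \<longrightarrow> snd s \<in> {1..N}" by (simp add: Inv_def valid_state_def)
      show "\<forall>s. Inv s \<longrightarrow> -1 \<le> W s"
      proof (intro allI impI)
        fix s :: "'v state"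
        have a: "((1::real)/2) ^ N \<le> 1" by (simp add: power_le_one)
        show "-1 \<le> W s" using a VN_bnd[of "1/2" s] by (simp add: W_def)
      qed
      show "(0::real) < 1/2" "(1::real)/2 < 1" by simp_all
      show "\<forall>s v. Inv s \<and> \<not> is_capture N s \<and> v \<in> cnbhd E (tpos (fst s) (snd s)) \<and>
          (snd s \<in> {1..N-1} \<longrightarrow> v = psi (snd s) s) \<longrightarrow>
          (is_capture N (move N s v) \<longrightarrow> 1/2 * reward N 0 N (fst (move N s v)) \<le> W s) \<and>
          (\<not> is_capture N (move N s v) \<longrightarrow> Inv (move N s v) \<and> 1/2 * W (move N s v) \<le> W s)"
      proof (intro allI impI)
        fix s :: "'v state" and v
        assume h: "Inv s \<and> \<not> is_capture N s \<and> v \<in> cnbhd E (tpos (fst s) (snd s)) \<and>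
          (snd s \<in> {1..N-1} \<longrightarrow> v = psi (snd s) s)"
        then have vs: "valid_state N V s" and nc: "\<not> is_capture N s"
          and v: "v \<in> cnbhd E (tpos (fst s) (snd s))" by (auto simp: Inv_def)
        have sn: "1 \<le> snd s" "snd s \<le> N" using valid_snd[OF vs] by auto
        show "(is_capture N (move N s v) \<longrightarrow> 1/2 * reward N 0 N (fst (move N s v)) \<le> W s) \<and>
          (\<not> is_capture N (move N s v) \<longrightarrow> Inv (move N s v) \<and> 1/2 * W (move N s v) \<le> W s)"
        proof (cases "snd s = N")
          case True
          then have nse: "\<not> safe_ex s" using h by (simp add: Inv_def)
          note R = rob_move[OF vs True, where v = v]
          have c1: "1/2 * reward N 0 N (fst (move N s v)) \<le> W s"
            using half_pow[of 1] N3 True by (simp add: reward_N W_def)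
          have c2: "Inv (move N s v) \<and> 1/2 * W (move N s v) \<le> W s"
          proof -
            have vr: "v \<in> cnbhd E (tpos (fst s) N)" using v True by simp
            then obtain i where i: "i \<in> {1..N-1}" "tpos (fst s) i \<in> cnbhd E v"
              using nse unfolding safe_ex_def by blast
            have adj: "adj (move N s v) i" using i R by (simp add: adj_def)
            have sm: "snd (move N s v) = 1" using R by simp
            have f: "hasfa (move N s v)" "fa (move N s v) \<le> i"
              using fa_le[of "move N s v" i] adj i sm by auto
            have f1: "1 \<le> fa (move N s v)" using f(1) sm unfolding hasfa_def fa_def
              by (metis (mono_tags, lifting) LeastI_ex)
            have inv: "Inv (move N s v)" using valid_move[OF vs v] f sm N3 by (simp add: Inv_def)
            have "((1::real)/2) ^ N \<le> (1/2) ^ (fa (move N s v) + 1)"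
              using f(2) i(1) by (intro half_pow) auto
            then have "1/2 * W (move N s v) \<le> W s"
              using sm N3 f(1) f1 True by (simp add: W_def VN_def)
            then show ?thesis using inv by simp
          qed
          show ?thesis using c1 c2 by blast
        next
          case False
          then have n: "snd s < N" "snd s \<in> {1..N-1}" using sn by auto
          have hf: "hasfa s" using h False by (simp add: Inv_def)
          have vg: "v = greedy (snd s) s" using h n False by (simp add: psi_def)
          show ?thesis
          proof (cases "adj s (snd s)")
            case True
            then have vv: "v = tpos (fst s) N" using vg by (simp add: greedy_def)
            have "fa s = snd s" using fa_eq[OF n(1) True] by simp
            then have "1/2 * reward N 0 N (fst (move N s v)) \<le> W s"
              using False hf by (simp add: reward_N W_def VN_def)
            then show ?thesis using stepB(1)[OF vs nc n(1)] vv by simp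
          next
            case na: False
            note A = stepA[OF vs nc n(1) na v] and AF = stepA_fa[OF vs nc n(1) na v]
              and AV = stepA_V[OF vs nc n(1) na v]
            have "Suc (snd s) < N" using fa_gt[OF hf na] by simp
            then have "Inv (move N s v)" using A AF hf by (simp add: Inv_def)
            moreover have "1/2 * W (move N s v) \<le> W s"
              using AV(1)[of "1/2"] A(2) False \<open>Suc (snd s) < N\<close> by (simp add: W_def)
            ultimately show ?thesis using A(1) by simp
          qed
        qed
      qed
    qed
    moreover have "W s < 0" using r by (simp add: W_def)
    ultimately have "payoff N (1/2) 0 N P s < 0" by simp
    then show "\<exists>t. is_capture N (state_at N (\<lambda>n. if n \<in> {1..N-1} then posprof psi n else prof' n) s t)"
      unfolding payoff_def P_def by (auto split: if_splits)
  qed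
  with nf show False by simp
qed


lemma gN_UB:
  assumes leg: "legal_profile N E P" and fx: "\<forall>n\<in>{n. n \<noteq> N}. P n = (\<lambda>h. psi n (last h))"
    and vs0: "valid_state N V s0" and nc0: "\<not> is_capture N s0" and g: "0 < g" "g < 1"
  shows "payoff N g 0 N P s0 \<le> VN g s0"
proof (rule UB[OF leg fx, where Inv = "valid_state N V"])
  show "valid_state N V s0" "\<not> is_capture N s0" "0 < g" "g < 1" by fact+
  show "\<forall>s. valid_state N V s \<longrightarrow> snd s \<in> {1..N}" by (simp add: valid_state_def)
  show "\<forall>s. valid_state N V s \<longrightarrow> -1 \<le> VN g s" using VN_bnd g by auto
  show "\<forall>s v. valid_state N V s \<and> \<not> is_capture N s \<and> v \<in> cnbhd E (tpos (fst s) (snd s)) \<and>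
          (snd s \<in> {n. n \<noteq> N} \<longrightarrow> v = psi (snd s) s) \<longrightarrow>
          (is_capture N (move N s v) \<longrightarrow> g * reward N 0 N (fst (move N s v)) \<le> VN g s) \<and>
          (\<not> is_capture N (move N s v) \<longrightarrow> valid_state N V (move N s v) \<and> g * VN g (move N s v) \<le> VN g s)"
  proof (intro allI impI)
    fix s :: "'v state" and v
    assume h: "valid_state N V s \<and> \<not> is_capture N s \<and> v \<in> cnbhd E (tpos (fst s) (snd s)) \<and>
          (snd s \<in> {n. n \<noteq> N} \<longrightarrow> v = psi (snd s) s)"
    then have vs: "valid_state N V s" and nc: "\<not> is_capture N s"
      and v: "v \<in> cnbhd E (tpos (fst s) (snd s))" by auto
    have sn: "1 \<le> snd s" "snd s \<le> N" using valid_snd[OF vs] by auto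
    show "(is_capture N (move N s v) \<longrightarrow> g * reward N 0 N (fst (move N s v)) \<le> VN g s) \<and>
          (\<not> is_capture N (move N s v) \<longrightarrow> valid_state N V (move N s v) \<and> g * VN g (move N s v) \<le> VN g s)"
    proof (cases "snd s = N")
      case True
      then have "VN g s = 0" using nofa_rob by (simp add: VN_def)
      then show ?thesis using valid_move[OF vs v] VN_bnd[of g "move N s v"] g
        by (simp add: reward_N mult_nonneg_nonpos)
    next
      case False
      then have n: "snd s < N" using sn by auto
      have vg: "v = greedy (snd s) s" using h False by (simp add: psi_def)
      show ?thesis
      proof (cases "adj s (snd s)")
        case True
        then have vv: "v = tpos (fst s) N" using vg by (simp add: greedy_def)
        have "VN g s = - g" using fa_eq[OF n True] by (simp add: VN_def)
        then show ?thesis using stepB(1)[OF vs nc n] vv by (simp add: reward_N)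
      next
        case na: False
        note A = stepA[OF vs nc n na v] and AV = stepA_V[OF vs nc n na v]
        show ?thesis using A(1,3) AV(1)[of g] by simp
      qed
    qed
  qed
qed

lemma gN_LB:
  assumes g2: "in_G2 N V E" and leg: "legal_profile N E P" and fx: "\<forall>n\<in>{N}. P n = (\<lambda>h. psi n (last h))"
    and vs0: "valid_state N V s0" and nc0: "\<not> is_capture N s0" and g: "0 < g" "g < 1"
  shows "VN g s0 \<le> payoff N g 0 N P s0"
proof (rule LB[OF leg fx, where Inv = "valid_state N V"])
  show "valid_state N V s0" "\<not> is_capture N s0" "0 < g" "g < 1" by fact+
  show "\<forall>s. valid_state N V s \<longrightarrow> snd s \<in> {1..N}" by (simp add: valid_state_def)
  show "\<forall>s. valid_state N V s \<longrightarrow> VN g s \<le> 1"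
  proof (intro allI impI)
    fix s :: "'v state" show "VN g s \<le> 1" using VN_bnd[of g s] g by linarith
  qed
  show "\<forall>s v. valid_state N V s \<and> \<not> is_capture N s \<and> v \<in> cnbhd E (tpos (fst s) (snd s)) \<and>
          (snd s \<in> {N} \<longrightarrow> v = psi (snd s) s) \<longrightarrow>
          (is_capture N (move N s v) \<longrightarrow> VN g s \<le> g * reward N 0 N (fst (move N s v))) \<and>
          (\<not> is_capture N (move N s v) \<longrightarrow> valid_state N V (move N s v) \<and> VN g s \<le> g * VN g (move N s v))"
  proof (intro allI impI)
    fix s :: "'v state" and v
    assume h: "valid_state N V s \<and> \<not> is_capture N s \<and> v \<in> cnbhd E (tpos (fst s) (snd s)) \<and>
          (snd s \<in> {N} \<longrightarrow> v = psi (snd s) s)"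
    then have vs: "valid_state N V s" and nc: "\<not> is_capture N s"
      and v: "v \<in> cnbhd E (tpos (fst s) (snd s))" by auto
    have sn: "1 \<le> snd s" "snd s \<le> N" using valid_snd[OF vs] by auto
    show "(is_capture N (move N s v) \<longrightarrow> VN g s \<le> g * reward N 0 N (fst (move N s v))) \<and>
          (\<not> is_capture N (move N s v) \<longrightarrow> valid_state N V (move N s v) \<and> VN g s \<le> g * VN g (move N s v))"
    proof (cases "snd s = N")
      case True
      then have vv: "v = safe s" using h by (simp add: psi_def)
      have se: "safe_ex s" using safe_exists[OF g2 vs nc True] .
      have "VN g s = 0" using nofa_rob True by (simp add: VN_def)
      moreover have "VN g (move N s v) = 0" using stepD(2)[OF vs True se] vv by (simp add: VN_def)
      ultimately show ?thesis using stepD(1)[OF vs True se] vv valid_move[OF vs v] by simp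
    next
      case False
      then have n: "snd s < N" using sn by auto
      show ?thesis
      proof (cases "adj s (snd s)")
        case True
        have e: "VN g s = - g" using fa_eq[OF n True] by (simp add: VN_def)
        have "g * (-1) \<le> g * VN g (move N s v)"
          using VN_bnd[of g "move N s v"] g by (intro mult_left_mono) auto
        then show ?thesis using e valid_move[OF vs v] by (simp add: reward_N)
      next
        case na: False
        note A = stepA[OF vs nc n na v] and AV = stepA_V[OF vs nc n na v]
        show ?thesis using A(1,3) AV(1)[of g] by simp
      qed
    qed
  qed
qed

lemma gm_UB:
  assumes m: "m \<in> {1..N-1}" and g2: "in_G2 N V E" and leg: "legal_profile N E P"
    and fx: "\<forall>n\<in>{n. n \<noteq> m}. P n = (\<lambda>h. psi n (last h))"
    and vs0: "valid_state N V s0" and nc0: "\<not> is_capture N s0" and g: "0 < g" "g < 1"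
  shows "payoff N g 0 m P s0 \<le> Vm g m s0"
proof (rule UB[OF leg fx, where Inv = "valid_state N V"])
  have mN: "m \<noteq> N" using m N3 by auto
  show "valid_state N V s0" "\<not> is_capture N s0" "0 < g" "g < 1" by fact+
  show "\<forall>s. valid_state N V s \<longrightarrow> snd s \<in> {1..N}" by (simp add: valid_state_def)
  show "\<forall>s. valid_state N V s \<longrightarrow> -1 \<le> Vm g m s"
  proof (intro allI impI)
    fix s :: "'v state" show "-1 \<le> Vm g m s" using Vm_bnd[of g m s] g by linarith
  qed
  show "\<forall>s v. valid_state N V s \<and> \<not> is_capture N s \<and> v \<in> cnbhd E (tpos (fst s) (snd s)) \<and>
          (snd s \<in> {n. n \<noteq> m} \<longrightarrow> v = psi (snd s) s) \<longrightarrow>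
          (is_capture N (move N s v) \<longrightarrow> g * reward N 0 m (fst (move N s v)) \<le> Vm g m s) \<and>
          (\<not> is_capture N (move N s v) \<longrightarrow> valid_state N V (move N s v) \<and> g * Vm g m (move N s v) \<le> Vm g m s)"
  proof (intro allI impI)
    fix s :: "'v state" and v
    assume h: "valid_state N V s \<and> \<not> is_capture N s \<and> v \<in> cnbhd E (tpos (fst s) (snd s)) \<and>
          (snd s \<in> {n. n \<noteq> m} \<longrightarrow> v = psi (snd s) s)"
    then have vs: "valid_state N V s" and nc: "\<not> is_capture N s"
      and v: "v \<in> cnbhd E (tpos (fst s) (snd s))" by auto
    have sn: "1 \<le> snd s" "snd s \<le> N" using valid_snd[OF vs] by auto
    have b0: "0 \<le> Vm g m s" "Vm g m s \<le> 1" "0 \<le> Vm g m (move N s v)" "Vm g m (move N s v) \<le> 1"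
      using Vm_bnd g by auto
    show "(is_capture N (move N s v) \<longrightarrow> g * reward N 0 m (fst (move N s v)) \<le> Vm g m s) \<and>
          (\<not> is_capture N (move N s v) \<longrightarrow> valid_state N V (move N s v) \<and> g * Vm g m (move N s v) \<le> Vm g m s)"
    proof (cases "snd s = N")
      case True
      then have vv: "v = safe s" using h mN by (simp add: psi_def)
      have se: "safe_ex s" using safe_exists[OF g2 vs nc True] .
      have "Vm g m (move N s v) = 0" using stepD(2)[OF vs True se] vv by (simp add: Vm_def)
      then show ?thesis using stepD(1)[OF vs True se] vv valid_move[OF vs v] b0 by simp
    next
      case False
      then have n: "snd s < N" using sn by auto
      show ?thesis
      proof (cases "adj s (snd s)")
        case True
        show ?thesis
        proof (cases "snd s = m")
          case sm: True
          have e: "Vm g m s = g" using fa_eq[OF n True] sm by (simp add: Vm_def)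
          have "g * reward N 0 m (fst (move N s v)) \<le> g * 1"
            using reward_bnd[OF mN] g by (intro mult_left_mono) auto
          moreover have "g * Vm g m (move N s v) \<le> g * 1"
            using b0 g by (intro mult_left_mono) auto
          ultimately show ?thesis using e valid_move[OF vs v] by simp
        next
          case sm: False
          then have vv: "v = tpos (fst s) N" using h True n by (simp add: psi_def greedy_def)
          show ?thesis using stepB(1)[OF vs nc n] stepB(2)[OF vs nc n, of m] m sm vv b0 by simp
        qed
      next
        case na: False
        note A = stepA[OF vs nc n na v] and AV = stepA_V[OF vs nc n na v]
        show ?thesis using A(1,3) AV(2)[where g=g and m=m] by simp
      qed
    qed
  qed
qed

lemma gm_LB:
  assumes m: "m \<in> {1..N-1}" and leg: "legal_profile N E P"
    and fx: "\<forall>n\<in>{m}. P n = (\<lambda>h. psi n (last h))"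
    and vs0: "valid_state N V s0" and nc0: "\<not> is_capture N s0" and g: "0 < g" "g < 1"
  shows "Vm g m s0 \<le> payoff N g 0 m P s0"
proof (rule LB[OF leg fx, where Inv = "valid_state N V"])
  have mN: "m \<noteq> N" using m N3 by auto
  show "valid_state N V s0" "\<not> is_capture N s0" "0 < g" "g < 1" by fact+
  show "\<forall>s. valid_state N V s \<longrightarrow> snd s \<in> {1..N}" by (simp add: valid_state_def)
  show "\<forall>s. valid_state N V s \<longrightarrow> Vm g m s \<le> 1" using Vm_bnd[of g m] g by force
  show "\<forall>s v. valid_state N V s \<and> \<not> is_capture N s \<and> v \<in> cnbhd E (tpos (fst s) (snd s)) \<and>
          (snd s \<in> {m} \<longrightarrow> v = psi (snd s) s) \<longrightarrow>
          (is_capture N (move N s v) \<longrightarrow> Vm g m s \<le> g * reward N 0 m (fst (move N s v))) \<and>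
          (\<not> is_capture N (move N s v) \<longrightarrow> valid_state N V (move N s v) \<and> Vm g m s \<le> g * Vm g m (move N s v))"
  proof (intro allI impI)
    fix s :: "'v state" and v
    assume h: "valid_state N V s \<and> \<not> is_capture N s \<and> v \<in> cnbhd E (tpos (fst s) (snd s)) \<and>
          (snd s \<in> {m} \<longrightarrow> v = psi (snd s) s)"
    then have vs: "valid_state N V s" and nc: "\<not> is_capture N s"
      and v: "v \<in> cnbhd E (tpos (fst s) (snd s))" by auto
    have sn: "1 \<le> snd s" "snd s \<le> N" using valid_snd[OF vs] by auto
    have b0: "0 \<le> Vm g m s" "Vm g m s \<le> 1" "0 \<le> Vm g m (move N s v)" "Vm g m (move N s v) \<le> 1"
      using Vm_bnd g by auto
    have r0: "0 \<le> g * reward N 0 m (fst (move N s v))" using reward_bnd(1)[OF mN, where xs="fst (move N s v)"] g by (intro mult_nonneg_nonneg) auto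
    have v0: "0 \<le> g * Vm g m (move N s v)" using b0 g by simp
    show "(is_capture N (move N s v) \<longrightarrow> Vm g m s \<le> g * reward N 0 m (fst (move N s v))) \<and>
          (\<not> is_capture N (move N s v) \<longrightarrow> valid_state N V (move N s v) \<and> Vm g m s \<le> g * Vm g m (move N s v))"
    proof (cases "snd s = N")
      case True
      then have "Vm g m s = 0" using nofa_rob by (simp add: Vm_def)
      then show ?thesis using r0 v0 valid_move[OF vs v] by simp
    next
      case False
      then have n: "snd s < N" using sn by auto
      show ?thesis
      proof (cases "adj s (snd s)")
        case True
        show ?thesis
        proof (cases "snd s = m")
          case sm: True
          have e: "Vm g m s = g" using fa_eq[OF n True] sm by (simp add: Vm_def)
          have vv: "v = tpos (fst s) N" using h True sm mN by (simp add: psi_def greedy_def)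
          show ?thesis using stepB(1)[OF vs nc n] stepB(2)[OF vs nc n, of m] m sm vv e by simp
        next
          case sm: False
          have "Vm g m s = 0" using fa_eq[OF n True] sm by (simp add: Vm_def)
          then show ?thesis using r0 v0 valid_move[OF vs v] by simp
        qed
      next
        case na: False
        note A = stepA[OF vs nc n na v] and AV = stepA_V[OF vs nc n na v]
        show ?thesis using A(1,3) AV(2)[where g=g and m=m] by simp
      qed
    qed
  qed
qed

end

theorem mainTheorem10:
  fixes V :: "'v set" and E :: "'v \<Rightarrow> 'v \<Rightarrow> bool" and N :: nat
    and s0 :: "'v state" and gam :: real
  assumes "N \<ge> 3"
    and "fsc_graph V E"
    and "in_G2 N V E"
    and "valid_state N V s0" and "\<not> is_capture N s0"
    and "0 < gam" and "gam < 1"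
  shows "\<exists>phi. (\<forall>m\<in>{1..N}. pos_optimal N V E gam 0 m (phi m))
               \<and> positional_trigger N V E gam 0 s0 phi"
proof -
  interpret scar N V E using assms(1,2) by unfold_locales
  note g2 = assms(3) and g = assms(6,7)
  define P0 where "P0 = posprof psi"
  have fxall: "P0 n = (\<lambda>h. psi n (last h))" for n by (simp add: P0_def posprof_def)
  have fx0: "\<forall>n\<in>F. P0 n = (\<lambda>h. psi n (last h))" for F using fxall by simp
  have lP0: "legal_profile N E P0" using legal_posprof by (simp add: P0_def)
  have opt: "pos_optimal N V E gam 0 m psi" if m: "m \<in> {1..N}" for m
    unfolding pos_optimal_def optimal_pair_def P0_def[symmetric]
  proof (intro conjI allI impI)
    show "legal_profile N E P0" by (rule lP0)
    fix s prof' assume s: "valid_state N V s \<and> \<not> is_capture N s" and lp: "legal_profile N E prof'"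
    have vs: "valid_state N V s" and nc: "\<not> is_capture N s" using s by auto
    have l1: "legal_profile N E (prof'(m := P0 m))" using legal_upd[OF lp lP0] .
    have l2: "legal_profile N E (P0(m := prof' m))" using legal_upd[OF lP0 lp] .
    have f1: "\<forall>n\<in>{m}. (prof'(m := P0 m)) n = (\<lambda>h. psi n (last h))" using fxall by simp
    have f2: "\<forall>n\<in>{n. n \<noteq> m}. (P0(m := prof' m)) n = (\<lambda>h. psi n (last h))" using fxall by simp
    have "payoff N gam 0 m P0 s \<le> payoff N gam 0 m (prof'(m := P0 m)) s \<and>
          payoff N gam 0 m (P0(m := prof' m)) s \<le> payoff N gam 0 m P0 s"
    proof (cases "m = N")
      case True
      have f1': "\<forall>n\<in>{N}. (prof'(m := P0 m)) n = (\<lambda>h. psi n (last h))" using f1 True by simp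
      have f2': "\<forall>n\<in>{n. n \<noteq> N}. (P0(m := prof' m)) n = (\<lambda>h. psi n (last h))" using f2 True by simp
      have a: "payoff N gam 0 N P0 s \<le> VN gam s" by (rule gN_UB[OF lP0 fx0 vs nc g])
      have b: "VN gam s \<le> payoff N gam 0 N (prof'(m := P0 m)) s" by (rule gN_LB[OF g2 l1 f1' vs nc g])
      have c: "payoff N gam 0 N (P0(m := prof' m)) s \<le> VN gam s" by (rule gN_UB[OF l2 f2' vs nc g])
      have d: "VN gam s \<le> payoff N gam 0 N P0 s" by (rule gN_LB[OF g2 lP0 fx0 vs nc g])
      show ?thesis using a b c d True by simp
    next
      case False
      then have m': "m \<in> {1..N-1}" using m by auto
      have a: "payoff N gam 0 m P0 s \<le> Vm gam m s" by (rule gm_UB[OF m' g2 lP0 fx0 vs nc g])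
      have b: "Vm gam m s \<le> payoff N gam 0 m (prof'(m := P0 m)) s" by (rule gm_LB[OF m' l1 f1 vs nc g])
      have c: "payoff N gam 0 m (P0(m := prof' m)) s \<le> Vm gam m s" by (rule gm_UB[OF m' g2 l2 f2 vs nc g])
      have d: "Vm gam m s \<le> payoff N gam 0 m P0 s" by (rule gm_LB[OF m' lP0 fx0 vs nc g])
      show ?thesis using a b c d by linarith
    qed
    then show "payoff N gam 0 m P0 s \<le> payoff N gam 0 m (prof'(m := P0 m)) s"
      "payoff N gam 0 m (P0(m := prof' m)) s \<le> payoff N gam 0 m P0 s" by auto
  qed
  have optN: "pos_optimal N V E gam 0 N psi" using opt assms(1) by simp
  have "positional_trigger N V E gam 0 s0 (\<lambda>m. psi)"
    unfolding positional_trigger_def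
  proof (intro ballI)
    fix n m assume "n \<in> {1..N}" "m \<in> {1..N}"
    show "\<exists>sigma. cr_optimal N V E gam 0 n sigma \<and>
        (\<forall>s. reach N E s0 s \<and> snd s = n \<and> \<not> is_capture N s \<longrightarrow> psi n s = sigma s)"
    proof (rule exI[where x = "psi n"], intro conjI allI impI)
      show "cr_optimal N V E gam 0 n (psi n)" unfolding cr_optimal_def using optN by blast
    qed (rule refl)
  qed
  moreover have "\<forall>m\<in>{1..N}. pos_optimal N V E gam 0 m psi" using opt by blast
  ultimately show ?thesis by (intro exI[where x = "\<lambda>m. psi"]) simp
qed

end
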